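(* Let $(\preceq_s)_{s\in S}$ be a finite family of WQOs on $X$ with conjunction $\preceq$. Suppose $I_s$ is a $\preceq_s$-ideal for each $s\in S$, $I=\bigcap_{s\in S}I_s$, and $(I_s)_{s\in S}\in\mathrm{Adh}_S(I)$. Then for every $L\subseteq X$: $I\in\mathrm{Adh}_\preceq(L)$ if and only if $(I_s)_{s\in S}\in\mathrm{Adh}_S(L)$.
   Context: Conjunction: $x\preceq y$ iff $x\preceq_s y$ for all $s$. An ideal is a nonempty, downward closed, directed subset. $\mathrm{Adh}_\preceq(L)$ is the set of $\preceq$-ideals $J$ such that $J=\downarrow_\preceq D$ for some $\preceq$-directed $D\subseteq L$ (equivalently $J\subseteq\downarrow_\preceq(L\cap J)$). $\mathrm{Adh}_S(L)$ is the set of families $(I_s)_{s\in S}$ of ideals ($I_s$ a $\preceq_s$-ideal) for which there is a $\preceq$-directed set $D\subseteq L$ with $I_s=\downarrow_{\preceq_s}D$ for every $s\in S$. *)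

theory Defs
  imports Main
begin

definition qo_on :: "'a set \<Rightarrow> ('a \<Rightarrow> 'a \<Rightarrow> bool) \<Rightarrow> bool" where
  "qo_on X r \<longleftrightarrow> (\<forall>x\<in>X. r x x) \<and> (\<forall>x\<in>X. \<forall>y\<in>X. \<forall>z\<in>X. r x y \<longrightarrow> r y z \<longrightarrow> r x z)"

definition wqo_on :: "'a set \<Rightarrow> ('a \<Rightarrow> 'a \<Rightarrow> bool) \<Rightarrow> bool" where
  "wqo_on X r \<longleftrightarrow> qo_on X r \<and>
     (\<forall>f :: nat \<Rightarrow> 'a. (\<forall>i. f i \<in> X) \<longrightarrow> (\<exists>i j. i < j \<and> r (f i) (f j)))"

definition conj_qo :: "'s set \<Rightarrow> ('s \<Rightarrow> 'a \<Rightarrow> 'a \<Rightarrow> bool) \<Rightarrow> 'a \<Rightarrow> 'a \<Rightarrow> bool" where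
  "conj_qo S le x y \<longleftrightarrow> (\<forall>s\<in>S. le s x y)"

definition down_closure :: "'a set \<Rightarrow> ('a \<Rightarrow> 'a \<Rightarrow> bool) \<Rightarrow> 'a set \<Rightarrow> 'a set" where
  "down_closure X r D = {x\<in>X. \<exists>d\<in>D. r x d}"

definition directed_on :: "('a \<Rightarrow> 'a \<Rightarrow> bool) \<Rightarrow> 'a set \<Rightarrow> bool" where
  "directed_on r D \<longleftrightarrow> D \<noteq> {} \<and> (\<forall>x\<in>D. \<forall>y\<in>D. \<exists>z\<in>D. r x z \<and> r y z)"

definition ideal_on :: "'a set \<Rightarrow> ('a \<Rightarrow> 'a \<Rightarrow> bool) \<Rightarrow> 'a set \<Rightarrow> bool" where
  "ideal_on X r J \<longleftrightarrow> J \<subseteq> X \<and> J \<noteq> {} \<and>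
     (\<forall>x\<in>X. \<forall>y\<in>J. r x y \<longrightarrow> x \<in> J) \<and> directed_on r J"

definition Adh :: "'a set \<Rightarrow> ('a \<Rightarrow> 'a \<Rightarrow> bool) \<Rightarrow> 'a set \<Rightarrow> 'a set set" where
  "Adh X r L = {J. ideal_on X r J \<and> (\<exists>D. D \<subseteq> L \<and> directed_on r D \<and> J = down_closure X r D)}"

text \<open>Families (I s) for s in S; values outside S are irrelevant.\<close>
definition Adh_S :: "'a set \<Rightarrow> 's set \<Rightarrow> ('s \<Rightarrow> 'a \<Rightarrow> 'a \<Rightarrow> bool) \<Rightarrow> 'a set \<Rightarrow> ('s \<Rightarrow> 'a set) set" where
  "Adh_S X S le L = {I. (\<forall>s\<in>S. ideal_on X (le s) (I s)) \<and>
     (\<exists>D. D \<subseteq> L \<and> directed_on (conj_qo S le) D \<and> (\<forall>s\<in>S. I s = down_closure X (le s) D))}"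

end

theory Submission
  imports Defs
begin

lemma dir_ub:
  assumes "finite F" "F \<subseteq> D" "D \<subseteq> X" "directed_on r D"
    and tr: "\<forall>x\<in>X. \<forall>y\<in>X. \<forall>z\<in>X. r x y \<longrightarrow> r y z \<longrightarrow> r x z"
  shows "\<exists>d\<in>D. \<forall>f\<in>F. r f d"
  using assms(1,2)
proof (induction F rule: finite_induct)
  case empty then show ?case using assms(4) unfolding directed_on_def by auto
next
  case (insert a F)
  then obtain d where d: "d \<in> D" "\<forall>f\<in>F. r f d" by auto
  from insert have "a \<in> D" by auto
  then obtain z where z: "z \<in> D" "r a z" "r d z" using d assms(4) unfolding directed_on_def by blast
  have "\<forall>f\<in>F. r f z" using d z tr insert assms(3) by blast
  then show ?case using z by auto
qed

theorem mainTheorem11: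
  fixes X :: "'a set" and S :: "'s set" and le :: "'s \<Rightarrow> 'a \<Rightarrow> 'a \<Rightarrow> bool"
    and Is :: "'s \<Rightarrow> 'a set" and L :: "'a set"
  assumes "finite S"
    and "\<forall>s\<in>S. wqo_on X (le s)"
    and "\<forall>s\<in>S. ideal_on X (le s) (Is s)"
    and "Is \<in> Adh_S X S le {x\<in>X. \<forall>s\<in>S. x \<in> Is s}"
    and "L \<subseteq> X"
  shows "{x\<in>X. \<forall>s\<in>S. x \<in> Is s} \<in> Adh X (conj_qo S le) L \<longleftrightarrow> Is \<in> Adh_S X S le L"
proof -
  define I where "I = {x\<in>X. \<forall>s\<in>S. x \<in> Is s}"
  have refl: "\<And>s x. s \<in> S \<Longrightarrow> x \<in> X \<Longrightarrow> le s x x"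
    using assms(2) unfolding wqo_on_def qo_on_def by blast
  have trans: "\<And>s x y z. s \<in> S \<Longrightarrow> x \<in> X \<Longrightarrow> y \<in> X \<Longrightarrow> z \<in> X \<Longrightarrow> le s x y \<Longrightarrow> le s y z \<Longrightarrow> le s x z"
    using assms(2) unfolding wqo_on_def qo_on_def by blast
  have ctrans: "\<forall>x\<in>X. \<forall>y\<in>X. \<forall>z\<in>X. conj_qo S le x y \<longrightarrow> conj_qo S le y z \<longrightarrow> conj_qo S le x z"
    unfolding conj_qo_def using trans by blast
  have dc: "\<And>s x y. s \<in> S \<Longrightarrow> x \<in> X \<Longrightarrow> y \<in> Is s \<Longrightarrow> le s x y \<Longrightarrow> x \<in> Is s"
    using assms(3) unfolding ideal_on_def by blast
  have IsX: "\<And>s. s \<in> S \<Longrightarrow> Is s \<subseteq> X"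
    using assms(3) unfolding ideal_on_def by blast
  obtain D' where D': "D' \<subseteq> I" "\<forall>s\<in>S. Is s = down_closure X (le s) D'"
    using assms(4) unfolding Adh_S_def I_def by blast
  have "I \<in> Adh X (conj_qo S le) L \<longleftrightarrow> Is \<in> Adh_S X S le L"
  proof
    assume "I \<in> Adh X (conj_qo S le) L"
    then obtain D where D: "D \<subseteq> L" "directed_on (conj_qo S le) D" "I = down_closure X (conj_qo S le) D"
      unfolding Adh_def by blast
    have "\<forall>s\<in>S. Is s = down_closure X (le s) D"
    proof (intro ballI equalityI subsetI)
      fix s x assume s: "s \<in> S" and x: "x \<in> down_closure X (le s) D"
      then obtain d where d: "d \<in> D" "le s x d" "x \<in> X" unfolding down_closure_def by blast
      have "d \<in> I" using D d assms(5) refl unfolding down_closure_def conj_qo_def by blast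
      then show "x \<in> Is s" using dc[OF s d(3) _ d(2)] s unfolding I_def by blast
    next
      fix s x assume s: "s \<in> S" and x: "x \<in> Is s"
      then obtain d' where d': "d' \<in> D'" "le s x d'" "x \<in> X" using D' unfolding down_closure_def by blast
      then have "d' \<in> down_closure X (conj_qo S le) D" using D'(1) D(3) by blast
      then obtain d where d: "d \<in> D" "conj_qo S le d' d" "d' \<in> X" unfolding down_closure_def by blast
      have "le s x d" using trans[OF s d'(3) d(3) _ d'(2)] d s D(1) assms(5) unfolding conj_qo_def by blast
      then show "x \<in> down_closure X (le s) D" using d d' unfolding down_closure_def by blast
    qed
    then show "Is \<in> Adh_S X S le L" using D assms(3) unfolding Adh_S_def by blast
  next
    assume "Is \<in> Adh_S X S le L"
    then obtain D where D: "D \<subseteq> L" "directed_on (conj_qo S le) D" "\<forall>s\<in>S. Is s = down_closure X (le s) D"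
      unfolding Adh_S_def by blast
    have DX: "D \<subseteq> X" using D assms(5) by blast
    have eq: "I = down_closure X (conj_qo S le) D"
    proof (intro equalityI subsetI)
      fix x assume x: "x \<in> I"
      have "\<forall>s\<in>S. \<exists>d\<in>D. le s x d" using x D(3) unfolding I_def down_closure_def by blast
      then obtain g where g: "\<forall>s\<in>S. g s \<in> D \<and> le s x (g s)" by metis
      obtain d where d: "d \<in> D" "\<forall>f\<in>g ` S. conj_qo S le f d"
        using dir_ub[OF finite_imageI[OF assms(1)] _ DX D(2) ctrans] g by blast
      have "conj_qo S le x d" unfolding conj_qo_def
      proof
        fix s assume s: "s \<in> S"
        have "le s (g s) d" using d s unfolding conj_qo_def by blast
        then show "le s x d" using trans[OF s _ _ _ _] g s x d DX unfolding I_def by blast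
      qed
      then show "x \<in> down_closure X (conj_qo S le) D" using x d unfolding I_def down_closure_def by blast
    next
      fix x assume "x \<in> down_closure X (conj_qo S le) D"
      then obtain d where d: "d \<in> D" "conj_qo S le x d" "x \<in> X" unfolding down_closure_def by blast
      then show "x \<in> I" using D(3) unfolding I_def down_closure_def conj_qo_def by blast
    qed
    have DI: "D \<subseteq> I" using eq DX refl unfolding down_closure_def conj_qo_def by blast
    have "ideal_on X (conj_qo S le) I"
      unfolding ideal_on_def
    proof (intro conjI ballI impI)
      show "I \<subseteq> X" unfolding I_def by blast
      show "I \<noteq> {}" using DI D(2) unfolding directed_on_def by blast
    next
      fix x y assume x: "x \<in> X" and y: "y \<in> I" and r: "conj_qo S le x y"
      then obtain d where "d \<in> D" "conj_qo S le y d" "y \<in> X" using eq unfolding down_closure_def by blast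
      then have "conj_qo S le x d" using ctrans x r DX by blast
      then show "x \<in> I" using eq x \<open>d \<in> D\<close> unfolding down_closure_def by blast
    next
      show "directed_on (conj_qo S le) I" unfolding directed_on_def
      proof (intro conjI ballI)
        show "I \<noteq> {}" using DI D(2) unfolding directed_on_def by blast
      next
        fix x y assume x: "x \<in> I" and y: "y \<in> I"
        obtain d1 where d1: "d1 \<in> D" "conj_qo S le x d1" "x \<in> X" using x eq unfolding down_closure_def by blast
        obtain d2 where d2: "d2 \<in> D" "conj_qo S le y d2" "y \<in> X" using y eq unfolding down_closure_def by blast
        obtain z where z: "z \<in> D" "conj_qo S le d1 z" "conj_qo S le d2 z"
          using D(2) d1 d2 unfolding directed_on_def by blast
        have "conj_qo S le x z" "conj_qo S le y z" using ctrans d1 d2 z DX by blast+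
        then show "\<exists>z\<in>I. conj_qo S le x z \<and> conj_qo S le y z" using z DI by blast
      qed
    qed
    then show "I \<in> Adh X (conj_qo S le) L" using D eq unfolding Adh_def by blast
  qed
  then show ?thesis unfolding I_def .
qed

end
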